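(* Let $G$ be a connected equimatchable graph. Then $G-v$ and $G\setminus e$ are equimatchable for all $v\in V(G)$ and all $e\in E(G)$ if and only if $G$ is either a complete graph on an odd number of vertices or a bipartite edge-stable equimatchable graph.
   Context: All graphs are finite and simple. A graph is equimatchable if all its maximal matchings have the same cardinality. $G\setminus e$ denotes the graph obtained by deleting the edge $e$ (keeping all vertices). An equimatchable graph $G$ is edge-stable if $G\setminus e$ is equimatchable for every $e\in E(G)$. *)

theory Defs
  imports Main
begin

definition graph :: "'a set \<Rightarrow> 'a set set \<Rightarrow> bool" where
  "graph V E \<longleftrightarrow> finite V \<and> (\<forall>e\<in>E. e \<subseteq> V \<and> card e = 2)"

definition matching :: "'a set set \<Rightarrow> 'a set set \<Rightarrow> bool" where
  "matching E M \<longleftrightarrow> M \<subseteq> E \<and> (\<forall>e\<in>M. \<forall>f\<in>M. e \<noteq> f \<longrightarrow> e \<inter> f = {})"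

definition maximal_matching :: "'a set set \<Rightarrow> 'a set set \<Rightarrow> bool" where
  "maximal_matching E M \<longleftrightarrow> matching E M \<and>
     (\<forall>M'. matching E M' \<and> M \<subseteq> M' \<longrightarrow> M' = M)"

definition equimatchable :: "'a set \<Rightarrow> 'a set set \<Rightarrow> bool" where
  "equimatchable V E \<longleftrightarrow>
     (\<forall>M M'. maximal_matching E M \<and> maximal_matching E M' \<longrightarrow> card M = card M')"

definition del_vertex_V :: "'a set \<Rightarrow> 'a \<Rightarrow> 'a set" where
  "del_vertex_V V v = V - {v}"

definition del_vertex_E :: "'a set set \<Rightarrow> 'a \<Rightarrow> 'a set set" where
  "del_vertex_E E v = {e \<in> E. v \<notin> e}"

definition del_edge :: "'a set set \<Rightarrow> 'a set \<Rightarrow> 'a set set" where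
  "del_edge E e = E - {e}"

definition edge_stable :: "'a set \<Rightarrow> 'a set set \<Rightarrow> bool" where
  "edge_stable V E \<longleftrightarrow> equimatchable V E \<and> (\<forall>e\<in>E. equimatchable V (del_edge E e))"

definition connected_graph :: "'a set \<Rightarrow> 'a set set \<Rightarrow> bool" where
  "connected_graph V E \<longleftrightarrow> V \<noteq> {} \<and>
     (\<forall>u\<in>V. \<forall>v\<in>V. (u, v) \<in> {(x, y). {x, y} \<in> E}\<^sup>*)"

definition complete_graph :: "'a set \<Rightarrow> 'a set set \<Rightarrow> bool" where
  "complete_graph V E \<longleftrightarrow> E = {{u, v} | u v. u \<in> V \<and> v \<in> V \<and> u \<noteq> v}"

definition bipartite :: "'a set \<Rightarrow> 'a set set \<Rightarrow> bool" where
  "bipartite V E \<longleftrightarrow> (\<exists>A B. A \<union> B = V \<and> A \<inter> B = {} \<and>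
     (\<forall>e\<in>E. \<exists>a\<in>A. \<exists>b\<in>B. e = {a, b}))"

end

theory Submission imports Defs begin

locale gr = fixes V :: "'a set" and E :: "'a set set"
  assumes gr: "graph V E"
begin

lemma finV: "finite V" using gr by (simp add: graph_def)
lemma E_sub: "e \<in> E \<Longrightarrow> e \<subseteq> V" using gr by (simp add: graph_def)
lemma E_card: "e \<in> E \<Longrightarrow> card e = 2" using gr by (simp add: graph_def)
lemma finE: "finite E"
  by (rule finite_subset[of _ "Pow V"]) (use E_sub finV in auto)
lemma edge_form: "e \<in> E \<Longrightarrow> \<exists>x y. e = {x,y} \<and> x \<noteq> y"
  using E_card card_2_iff by blast
lemma edge_ne: "{x,y} \<in> E \<Longrightarrow> x \<noteq> y"
  using E_card[of "{x,y}"] by (cases "x = y") auto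
lemma edgeV: "{x,y} \<in> E \<Longrightarrow> x \<in> V \<and> y \<in> V"
  using E_sub by blast

lemma ecomm: "{x,y} \<in> E \<longleftrightarrow> {y,x} \<in> E" by (simp add: insert_commute)

lemma m_disj: "matching E' M \<Longrightarrow> e \<in> M \<Longrightarrow> f \<in> M \<Longrightarrow> x \<in> e \<Longrightarrow> x \<in> f \<Longrightarrow> e = f"
  unfolding matching_def by blast

lemma maximal_iff:
  assumes "E' \<subseteq> E"
  shows "maximal_matching E' M \<longleftrightarrow> matching E' M \<and> (\<forall>e\<in>E'. e \<inter> \<Union>M \<noteq> {})"
proof
  assume m: "maximal_matching E' M"
  hence mm: "matching E' M" by (simp add: maximal_matching_def)
  show "matching E' M \<and> (\<forall>e\<in>E'. e \<inter> \<Union>M \<noteq> {})"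
  proof (intro conjI ballI mm notI)
    fix e assume e: "e \<in> E'" and d: "e \<inter> \<Union>M = {}"
    have "e \<in> E" using e assms by blast
    hence ne: "e \<noteq> {}" using E_card[of e] by auto
    have "e \<notin> M" using d ne by blast
    moreover have "matching E' (insert e M)"
      unfolding matching_def
    proof (intro conjI ballI impI)
      show "insert e M \<subseteq> E'" using mm e by (simp add: matching_def)
      fix f g assume fg: "f \<in> insert e M" "g \<in> insert e M" "f \<noteq> g"
      show "f \<inter> g = {}" using fg mm d unfolding matching_def by blast
    qed
    ultimately show False using m unfolding maximal_matching_def by blast
  qed
next
  assume h: "matching E' M \<and> (\<forall>e\<in>E'. e \<inter> \<Union>M \<noteq> {})"
  show "maximal_matching E' M" unfolding maximal_matching_def
  proof (intro conjI allI impI)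
    show "matching E' M" using h by simp
    fix M' assume a: "matching E' M' \<and> M \<subseteq> M'"
    show "M' = M"
    proof (rule ccontr)
      assume "M' \<noteq> M"
      then obtain e where e: "e \<in> M'" "e \<notin> M" using a by blast
      hence "e \<in> E'" using a by (auto simp: matching_def)
      hence "e \<inter> \<Union>M \<noteq> {}" using h by blast
      then obtain x f where x: "x \<in> e" "x \<in> f" "f \<in> M" by blast
      have "f \<in> M'" using x a by blast
      have "e \<noteq> f" using e x by blast
      hence "e \<inter> f = {}" using a e \<open>f \<in> M'\<close> unfolding matching_def by blast
      thus False using x by blast
    qed
  qed
qed

lemma extend:
  assumes "E' \<subseteq> E" "matching E' N"
  shows "\<exists>M. maximal_matching E' M \<and> N \<subseteq> M"
proof -
  let ?S = "{M. matching E' M \<and> N \<subseteq> M}"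
  have fin: "finite ?S"
    by (rule finite_subset[of _ "Pow E'"]) (use finE assms(1) finite_subset in \<open>auto simp: matching_def\<close>)
  have ne: "?S \<noteq> {}" using assms by auto
  have "Max (card ` ?S) \<in> card ` ?S" using fin ne by (intro Max_in) auto
  then obtain M where M1: "M \<in> ?S" "card M = Max (card ` ?S)" by auto
  have M: "M \<in> ?S" "\<forall>M'\<in>?S. card M' \<le> card M"
    using M1 fin by auto
  have "maximal_matching E' M" unfolding maximal_matching_def
  proof (intro conjI allI impI)
    show "matching E' M" using M by simp
    fix M' assume a: "matching E' M' \<and> M \<subseteq> M'"
    hence "M' \<in> ?S" using M by auto
    hence "card M' \<le> card M" using M by auto
    moreover have "finite M'" using a finE assms(1) by (meson finite_subset matching_def)
    ultimately show "M' = M" using a card_subset_eq by (metis card_mono order_antisym)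
  qed
  thus ?thesis using M by auto
qed


lemma match_fin: "matching E' M \<Longrightarrow> E' \<subseteq> E \<Longrightarrow> finite M"
  using finE by (meson finite_subset matching_def)

lemma match_sub: "matching E' M \<Longrightarrow> M \<subseteq> E'"
  by (simp add: matching_def)

lemma match_mono: "matching E1 M \<Longrightarrow> M \<subseteq> E2 \<Longrightarrow> matching E2 M"
  by (simp add: matching_def)

lemma cov_V: "matching E' M \<Longrightarrow> E' \<subseteq> E \<Longrightarrow> \<Union>M \<subseteq> V"
  using E_sub by (auto simp: matching_def)

lemma max_match: "maximal_matching E' M \<Longrightarrow> matching E' M"
  by (simp add: maximal_matching_def)

lemma max_sub: "maximal_matching E M \<Longrightarrow> M \<subseteq> E' \<Longrightarrow> E' \<subseteq> E \<Longrightarrow> maximal_matching E' M"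
proof -
  assume a: "maximal_matching E M" "M \<subseteq> E'" "E' \<subseteq> E"
  have "matching E M" "\<forall>e\<in>E. e \<inter> \<Union>M \<noteq> {}" using a(1) maximal_iff[of E M] by auto
  hence "matching E' M" "\<forall>e\<in>E'. e \<inter> \<Union>M \<noteq> {}" using a(2,3) match_mono by blast+
  thus ?thesis using maximal_iff[OF a(3)] by blast
qed

lemma max_edge: "maximal_matching E M \<Longrightarrow> {s,t} \<in> E \<Longrightarrow> s \<in> \<Union>M \<or> t \<in> \<Union>M"
proof -
  assume a: "maximal_matching E M" "{s,t} \<in> E"
  have "{s,t} \<inter> \<Union>M \<noteq> {}" using a maximal_iff[of E M] by blast
  thus ?thesis by blast
qed

lemma card_le:
  assumes "E' \<subseteq> E" "equimatchable W E'" "maximal_matching E' M" "matching E' N"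
  shows "card N \<le> card M"
proof -
  obtain N' where N': "maximal_matching E' N'" "N \<subseteq> N'" using extend assms by blast
  have "card N \<le> card N'" using N' assms(1) match_fin[OF max_match[OF N'(1)]] card_mono by blast
  also have "\<dots> = card M" using assms N' unfolding equimatchable_def by blast
  finally show ?thesis .
qed

lemma card_eq_max:
  assumes "E' \<subseteq> E" "equimatchable W E'" "maximal_matching E' M" "matching E' N" "card N = card M"
  shows "maximal_matching E' N"
  unfolding maximal_matching_def
proof (intro conjI allI impI)
  show "matching E' N" by fact
  fix N' assume a: "matching E' N' \<and> N \<subseteq> N'"
  have "card N' \<le> card M" using card_le assms a by blast
  moreover have "finite N'" using a assms(1) match_fin by blast
  moreover have "card N \<le> card N'" using a \<open>finite N'\<close> card_mono by blast
  ultimately have "card N = card N'" using assms(5) by simp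
  thus "N' = N" using a \<open>finite N'\<close> card_subset_eq by metis
qed

lemma card_cov:
  assumes "matching E' M" "E' \<subseteq> E"
  shows "card (\<Union>M) = 2 * card M"
proof -
  have "card (\<Union>M) = sum card M"
  proof (rule card_Union_disjoint)
    show "pairwise disjnt M" using assms(1) unfolding matching_def pairwise_def disjnt_def by blast
    fix A assume "A \<in> M" 
    hence "A \<in> E" using match_sub[OF assms(1)] assms(2) by blast
    thus "finite A" using finite_subset[OF E_sub finV] by blast
  qed
  also have "\<dots> = sum (\<lambda>_. 2) M"
  proof (rule sum.cong)
    fix A assume "A \<in> M" 
    hence "A \<in> E" using match_sub[OF assms(1)] assms(2) by blast
    thus "card A = 2" using E_card by blast
  qed simp
  finally show ?thesis by simp
qed

lemma swap:
  assumes m: "matching E M" and S: "S \<subseteq> M" and T: "T \<subseteq> E"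
    and Td: "\<forall>t\<in>T. \<forall>t'\<in>T. t \<noteq> t' \<longrightarrow> t \<inter> t' = {}"
    and Tc: "\<Union>T \<subseteq> \<Union>S \<union> - \<Union>M"
  shows "matching E (M - S \<union> T)" "card (M - S \<union> T) + card S = card M + card T"
    "\<Union>(M - S \<union> T) = (\<Union>M - \<Union>S) \<union> \<Union>T"
proof -
  have cd: "\<Union>(M - S) = \<Union>M - \<Union>S"
  proof
    show "\<Union>(M - S) \<subseteq> \<Union>M - \<Union>S"
    proof
      fix x assume "x \<in> \<Union>(M - S)"
      then obtain e where e: "x \<in> e" "e \<in> M" "e \<notin> S" by blast
      have "x \<notin> \<Union>S"
      proof
        assume "x \<in> \<Union>S"
        then obtain f where "x \<in> f" "f \<in> S" by blast
        hence "e = f" using m_disj[OF m] e S by blast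
        thus False using e \<open>f \<in> S\<close> by simp
      qed
      thus "x \<in> \<Union>M - \<Union>S" using e by blast
    qed
  qed blast
  have fM: "finite M" using match_fin[OF m] by simp
  have fT: "finite T" using T finE finite_subset by blast
  have dj: "(M - S) \<inter> T = {}"
  proof (rule ccontr)
    assume "(M - S) \<inter> T \<noteq> {}"
    then obtain t where t: "t \<in> M - S" "t \<in> T" by blast
    have "t \<noteq> {}" using t T E_card by fastforce
    then obtain x where "x \<in> t" by blast
    hence "x \<in> \<Union>M - \<Union>S" using cd t by blast
    moreover have "x \<in> \<Union>S \<union> - \<Union>M" using Tc t \<open>x \<in> t\<close> by blast
    ultimately show False by blast
  qed
  show "matching E (M - S \<union> T)" unfolding matching_def
  proof (intro conjI ballI impI)
    show "M - S \<union> T \<subseteq> E" using m T by (auto simp: matching_def)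
    fix e f assume ef: "e \<in> M - S \<union> T" "f \<in> M - S \<union> T" "e \<noteq> f"
    show "e \<inter> f = {}"
    proof (cases "e \<in> T")
      case True
      show ?thesis
      proof (cases "f \<in> T")
        case True thus ?thesis using Td ef \<open>e \<in> T\<close> by blast
      next
        case False
        hence "f \<in> M - S" using ef by blast
        hence "\<Union>(M - S) \<supseteq> f" by blast
        thus ?thesis using cd Tc \<open>e \<in> T\<close> by blast
      qed
    next
      case False
      hence e1: "e \<in> M - S" using ef by blast
      show ?thesis
      proof (cases "f \<in> T")
        case True
        have "\<Union>(M - S) \<supseteq> e" using e1 by blast
        thus ?thesis using cd Tc True by blast
      next
        case False
        hence "f \<in> M" using ef by blast
        thus ?thesis using m ef e1 unfolding matching_def by blast
      qed
    qed
  qed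
  have "card (M - S \<union> T) = card (M - S) + card T"
    using dj fM fT by (simp add: card_Un_disjoint)
  moreover have "card (M - S) = card M - card S" using S fM by (simp add: card_Diff_subset finite_subset)
  moreover have "card S \<le> card M" using S fM by (simp add: card_mono)
  ultimately show "card (M - S \<union> T) + card S = card M + card T" by simp
  show "\<Union>(M - S \<union> T) = (\<Union>M - \<Union>S) \<union> \<Union>T" using cd by blast
qed

end

locale eqg = gr +
  assumes EQ: "equimatchable V E"
  and CONN: "connected_graph V E"
begin

lemma augment: "maximal_matching E M \<Longrightarrow> matching E N \<Longrightarrow> card N > card M \<Longrightarrow> False"
  using card_le[OF subset_refl EQ] by fastforce

lemma kill_none:
  assumes "maximal_matching E M" "matching E N" "\<forall>f\<in>E. f \<inter> \<Union>N \<noteq> {}"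
  shows "card N = card M"
proof -
  have "maximal_matching E N" using assms(2,3) maximal_iff[of E N] by blast
  thus ?thesis using assms(1) EQ unfolding equimatchable_def by blast
qed

lemma kill_vertex:
  assumes eqv: "equimatchable W (del_vertex_E E v)" and M: "maximal_matching E M" "v \<notin> \<Union>M"
    and N: "matching E N" "v \<notin> \<Union>N" "\<forall>f\<in>E. f \<inter> \<Union>N = {} \<longrightarrow> v \<in> f"
  shows "card N = card M"
proof -
  have sub: "del_vertex_E E v \<subseteq> E" by (auto simp: del_vertex_E_def)
  have "M \<subseteq> del_vertex_E E v" using match_sub[OF max_match[OF M(1)]] M(2) by (auto simp: del_vertex_E_def)
  hence M1: "maximal_matching (del_vertex_E E v) M" using max_sub[OF M(1) _ sub] by blast
  have Ns: "N \<subseteq> del_vertex_E E v" using N(2) match_sub[OF N(1)] by (auto simp: del_vertex_E_def)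
  have "\<forall>f\<in>del_vertex_E E v. f \<inter> \<Union>N \<noteq> {}" using N(3) by (auto simp: del_vertex_E_def)
  hence N1: "maximal_matching (del_vertex_E E v) N"
    using maximal_iff[OF sub, of N] match_mono[OF N(1) Ns] by blast
  show ?thesis using eqv M1 N1 unfolding equimatchable_def by blast
qed

lemma kill_edge:
  assumes eqv: "equimatchable W (del_edge E e)" and M: "maximal_matching E M" "e \<notin> M"
    and N: "matching E N" "e \<notin> N" "\<forall>f\<in>E. f \<inter> \<Union>N = {} \<longrightarrow> f = e"
  shows "card N = card M"
proof -
  have sub: "del_edge E e \<subseteq> E" by (auto simp: del_edge_def)
  have "M \<subseteq> del_edge E e" using match_sub[OF max_match[OF M(1)]] M(2) by (auto simp: del_edge_def)
  hence M1: "maximal_matching (del_edge E e) M" using max_sub[OF M(1) _ sub] by blast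
  have Ns: "N \<subseteq> del_edge E e" using N(2) match_sub[OF N(1)] by (auto simp: del_edge_def)
  have "\<forall>f\<in>del_edge E e. f \<inter> \<Union>N \<noteq> {}" using N(3) by (auto simp: del_edge_def)
  hence N1: "maximal_matching (del_edge E e) N"
    using maximal_iff[OF sub, of N] match_mono[OF N(1) Ns] by blast
  show ?thesis using eqv M1 N1 unfolding equimatchable_def by blast
qed


lemma Medge: "maximal_matching E M \<Longrightarrow> {a,b} \<in> M \<Longrightarrow> a \<noteq> b \<and> a \<in> \<Union>M \<and> b \<in> \<Union>M \<and> {a,b} \<in> E"
proof -
  assume a: "maximal_matching E M" "{a,b} \<in> M"
  have "{a,b} \<in> E" using match_sub[OF max_match[OF a(1)]] a(2) by blast
  moreover have "a \<noteq> b" using edge_ne calculation by blast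
  moreover have "a \<in> \<Union>M" "b \<in> \<Union>M" using a(2) by blast+
  ultimately show ?thesis by blast
qed

lemma Mdist: "maximal_matching E M \<Longrightarrow> {a,b} \<in> M \<Longrightarrow> {p,q} \<in> M \<Longrightarrow> {a,b} \<noteq> {p,q}
   \<Longrightarrow> a \<noteq> p \<and> a \<noteq> q \<and> b \<noteq> p \<and> b \<noteq> q"
proof -
  assume a: "maximal_matching E M" "{a,b} \<in> M" "{p,q} \<in> M" "{a,b} \<noteq> {p,q}"
  have "\<forall>e\<in>M. \<forall>f\<in>M. e \<noteq> f \<longrightarrow> e \<inter> f = {}" using max_match[OF a(1)] unfolding matching_def by simp
  hence "{a,b} \<inter> {p,q} = {}" using a(2-4) by simp
  thus ?thesis by auto
qed

lemma sw10:
  assumes M: "maximal_matching E M" and ab: "{a,b} \<in> M"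
  defines "N \<equiv> M - {{a,b}}"
  shows "matching E N" "card N + 1 = card M" "\<And>x. x \<in> \<Union>N \<longleftrightarrow> x \<in> \<Union>M \<and> x \<noteq> a \<and> x \<noteq> b"
proof -
  have m: "matching E M" using max_match[OF M] .
  have S: "{{a,b}} \<subseteq> M" using ab by simp
  note sw = swap[OF m S, of "{}", simplified]
  show "matching E N" using sw(1) unfolding N_def by simp
  show "card N + 1 = card M" using sw(2) unfolding N_def by simp
  fix x show "x \<in> \<Union>N \<longleftrightarrow> x \<in> \<Union>M \<and> x \<noteq> a \<and> x \<noteq> b" using sw(3) unfolding N_def by blast
qed

lemma sw11:
  assumes M: "maximal_matching E M" and ab: "{a,b} \<in> M" and c: "c \<notin> \<Union>M" and ac: "{a,c} \<in> E"
  defines "N \<equiv> M - {{a,b}} \<union> {{a,c}}"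
  shows "maximal_matching E N" "card N = card M" "\<And>x. x \<in> \<Union>N \<longleftrightarrow> (x \<in> \<Union>M \<and> x \<noteq> b) \<or> x = c"
proof -
  have m: "matching E M" using max_match[OF M] .
  have e: "a \<noteq> b" "a \<in> \<Union>M" "b \<in> \<Union>M" using Medge[OF M ab] by auto
  have S: "{{a,b}} \<subseteq> M" using ab by simp
  have T: "{{a,c}} \<subseteq> E" using ac by simp
  have Td: "\<forall>t\<in>{{a,c}}. \<forall>t'\<in>{{a,c}}. t \<noteq> t' \<longrightarrow> t \<inter> t' = {}" by simp
  have Tc: "\<Union>{{a,c}} \<subseteq> \<Union>{{a,b}} \<union> - \<Union>M" using c by auto
  note sw = swap[OF m S T Td Tc]
  show "card N = card M" using sw(2) unfolding N_def by simp
  thus "maximal_matching E N" using card_eq_max[OF subset_refl EQ M sw(1)[folded N_def]] by simp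
  fix x show "x \<in> \<Union>N \<longleftrightarrow> (x \<in> \<Union>M \<and> x \<noteq> b) \<or> x = c" using sw(3)[folded N_def] e c by auto
qed

lemma aug12:
  assumes M: "maximal_matching E M" and ab: "{a,b} \<in> M" and s: "s \<notin> \<Union>M" and t: "t \<notin> \<Union>M"
    and st: "s \<noteq> t" and as: "{a,s} \<in> E" and bt: "{b,t} \<in> E"
  shows False
proof -
  have m: "matching E M" using max_match[OF M] .
  have e: "a \<noteq> b" "a \<in> \<Union>M" "b \<in> \<Union>M" using Medge[OF M ab] by auto
  have d: "{a,s} \<noteq> {b,t}" using e s by auto
  have S: "{{a,b}} \<subseteq> M" using ab by simp
  have T: "{{a,s},{b,t}} \<subseteq> E" using as bt by simp
  have Td: "\<forall>x\<in>{{a,s},{b,t}}. \<forall>y\<in>{{a,s},{b,t}}. x \<noteq> y \<longrightarrow> x \<inter> y = {}"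
    using e s t st by auto
  have Tc: "\<Union>{{a,s},{b,t}} \<subseteq> \<Union>{{a,b}} \<union> - \<Union>M" using s t by auto
  note sw = swap[OF m S T Td Tc]
  have "card {{a,s},{b,t}} = 2" using d by simp
  hence "card (M - {{a,b}} \<union> {{a,s},{b,t}}) > card M" using sw(2) by simp
  thus False using augment[OF M sw(1)] by simp
qed

lemma aug23:
  assumes M: "maximal_matching E M" and ab: "{a,b} \<in> M" and pq: "{p,q} \<in> M" and ne: "{a,b} \<noteq> {p,q}"
    and c: "c \<notin> \<Union>M" and w: "w \<notin> \<Union>M" and cw: "c \<noteq> w"
    and ap: "{a,p} \<in> E" and bc: "{b,c} \<in> E" and qw: "{q,w} \<in> E"
  shows False
proof -
  have m: "matching E M" using max_match[OF M] .
  have e: "a \<noteq> b" "a \<in> \<Union>M" "b \<in> \<Union>M" using Medge[OF M ab] by auto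
  have e2: "p \<noteq> q" "p \<in> \<Union>M" "q \<in> \<Union>M" using Medge[OF M pq] by auto
  have di: "a \<noteq> p" "a \<noteq> q" "b \<noteq> p" "b \<noteq> q" using Mdist[OF M ab pq ne] by auto
  have c1: "card {{a,b},{p,q}} = 2" using ne by simp
  have x1: "{a,p} \<noteq> {b,c}" "{a,p} \<noteq> {q,w}" "{b,c} \<noteq> {q,w}" using e e2 di c w by auto
  have c2: "card {{a,p},{b,c},{q,w}} = 3" using x1 by simp
  have S: "{{a,b},{p,q}} \<subseteq> M" using ab pq by simp
  have T: "{{a,p},{b,c},{q,w}} \<subseteq> E" using ap bc qw by simp
  have Td: "\<forall>x\<in>{{a,p},{b,c},{q,w}}. \<forall>y\<in>{{a,p},{b,c},{q,w}}. x \<noteq> y \<longrightarrow> x \<inter> y = {}"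
    using e e2 di c w cw by auto
  have Tc: "\<Union>{{a,p},{b,c},{q,w}} \<subseteq> \<Union>{{a,b},{p,q}} \<union> - \<Union>M" using c w by auto
  note sw = swap[OF m S T Td Tc]
  hence "card (M - {{a,b},{p,q}} \<union> {{a,p},{b,c},{q,w}}) > card M" using c1 c2 by simp
  thus False using augment[OF M sw(1)] by simp
qed

lemma sw22:
  assumes M: "maximal_matching E M" and ab: "{a,b} \<in> M" and pq: "{p,q} \<in> M" and ne: "{a,b} \<noteq> {p,q}"
    and ap: "{a,p} \<in> E"
  defines "N \<equiv> M - {{a,b},{p,q}} \<union> {{a,p}}"
  shows "matching E N" "card N + 1 = card M" "\<And>x. x \<in> \<Union>N \<longleftrightarrow> x \<in> \<Union>M \<and> x \<noteq> b \<and> x \<noteq> q"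
    "{a,p} \<in> N"
proof -
  have m: "matching E M" using max_match[OF M] .
  have e: "a \<noteq> b" "a \<in> \<Union>M" "b \<in> \<Union>M" using Medge[OF M ab] by auto
  have e2: "p \<noteq> q" "p \<in> \<Union>M" "q \<in> \<Union>M" using Medge[OF M pq] by auto
  have di: "a \<noteq> p" "a \<noteq> q" "b \<noteq> p" "b \<noteq> q" using Mdist[OF M ab pq ne] by auto
  have c1: "card {{a,b},{p,q}} = 2" using ne by simp
  have S: "{{a,b},{p,q}} \<subseteq> M" using ab pq by simp
  have T: "{{a,p}} \<subseteq> E" using ap by simp
  have Td: "\<forall>x\<in>{{a,p}}. \<forall>y\<in>{{a,p}}. x \<noteq> y \<longrightarrow> x \<inter> y = {}" by simp
  have Tc: "\<Union>{{a,p}} \<subseteq> \<Union>{{a,b},{p,q}} \<union> - \<Union>M" by auto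
  note sw = swap[OF m S T Td Tc, folded N_def]
  show "matching E N" using sw(1) .
  show "card N + 1 = card M" using sw(2) c1 by simp
  fix x show "x \<in> \<Union>N \<longleftrightarrow> x \<in> \<Union>M \<and> x \<noteq> b \<and> x \<noteq> q" using sw(3) e e2 di by auto
next
  show "{a,p} \<in> N" unfolding N_def by simp
qed

end

locale esg = eqg +
  assumes ES: "\<forall>e\<in>E. equimatchable V (del_edge E e)"

locale vsg = esg +
  assumes VS: "\<forall>v\<in>V. equimatchable (del_vertex_V V v) (del_vertex_E E v)"
begin

lemma TL:
  assumes M: "maximal_matching E M" and ab: "{a,b} \<in> M" and c: "c \<in> V" "c \<notin> \<Union>M"
   and ac: "{a,c} \<in> E" and bc: "{b,c} \<in> E" and pq: "{p,q} \<in> M" and ne: "{a,b} \<noteq> {p,q}"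
   and aq: "{a,q} \<in> E"
  shows "{p,b} \<in> E \<and> {p,c} \<in> E"
proof -
  have e: "a \<noteq> b" "a \<in> \<Union>M" "b \<in> \<Union>M" using Medge[OF M ab] by auto
  have e2: "p \<noteq> q" "p \<in> \<Union>M" "q \<in> \<Union>M" using Medge[OF M pq] by auto
  have di: "a \<noteq> p" "a \<noteq> q" "b \<noteq> p" "b \<noteq> q" using Mdist[OF M ab pq ne] by auto
  have ne': "{a,b} \<noteq> {q,p}" using ne by (simp add: insert_commute)
  have pq': "{q,p} \<in> M" using pq by (simp add: insert_commute)
  define N where "N = M - {{a,b},{q,p}} \<union> {{a,q}}"
  note N = sw22[OF M ab pq' ne' aq, folded N_def]
  have bU: "w = c" if "w \<notin> \<Union>M" "{b,w} \<in> E" for w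
  proof (rule ccontr)
    assume "w \<noteq> c" thus False using aug12[OF M ab c(2) that(1) _ ac that(2)] by auto
  qed
  have pU: "w = c" if "w \<notin> \<Union>M" "{p,w} \<in> E" for w
  proof (rule ccontr)
    assume "w \<noteq> c" hence "c \<noteq> w" by simp
    thus False using aug23[OF M ab pq' ne' c(2) that(1) _ aq bc that(2)] by simp
  qed
  have F: "f = {b,c} \<or> f = {b,p} \<or> f = {p,c}" if f: "f \<in> E" "f \<inter> \<Union>N = {}" for f
  proof -
    obtain s t where st: "f = {s,t}" "s \<noteq> t" using edge_form f(1) by blast
    have "s \<notin> \<Union>N" "t \<notin> \<Union>N" using f(2) st by auto
    hence s': "s \<notin> \<Union>M \<or> s = b \<or> s = p" "t \<notin> \<Union>M \<or> t = b \<or> t = p" using N(3)[of s] N(3)[of t] by blast+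
    have cov: "s \<in> \<Union>M \<or> t \<in> \<Union>M" using max_edge[OF M] f(1) st by blast
    have E1: "{s,t} \<in> E" "{t,s} \<in> E" using f(1) st by (auto simp: insert_commute)
    show ?thesis
    proof (cases "s = b")
      case True
      hence "t \<noteq> b" using st by simp
      hence "t \<notin> \<Union>M \<or> t = p" using s'(2) by simp
      thus ?thesis
      proof
        assume "t \<notin> \<Union>M" hence "t = c" using bU E1(1) True by simp
        thus ?thesis using st True by simp
      next
        assume "t = p" thus ?thesis using st True by simp
      qed
    next
      case sb: False
      show ?thesis
      proof (cases "s = p")
        case True
        hence "t \<noteq> p" using st by simp
        hence "t \<notin> \<Union>M \<or> t = b" using s'(2) by simp
        thus ?thesis
        proof
          assume "t \<notin> \<Union>M" hence "t = c" using pU E1(1) True by simp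
          thus ?thesis using st True by simp
        next
          assume "t = b" thus ?thesis using st True by (simp add: insert_commute)
        qed
      next
        case False
        hence sM: "s \<notin> \<Union>M" using s'(1) sb by simp
        hence "t = b \<or> t = p" using cov s'(2) by auto
        thus ?thesis
        proof
          assume "t = b" hence "s = c" using bU E1(2) sM by simp
          thus ?thesis using st \<open>t = b\<close> by (simp add: insert_commute)
        next
          assume "t = p" hence "s = c" using pU E1(2) sM by simp
          thus ?thesis using st \<open>t = p\<close> by (simp add: insert_commute)
        qed
      qed
    qed
  qed
  have cN: "c \<notin> \<Union>N" using N(3)[of c] c(2) by blast
  have bN: "b \<notin> \<Union>N" using N(3)[of b] by blast
  have bV: "b \<in> V" using edgeV bc by blast
  have cardN: "card N \<noteq> card M" using N(2) by simp
  have pb: "{b,p} = {p,b}" by (simp add: insert_commute)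
  show ?thesis
  proof (rule ccontr)
    assume neg: "\<not> ({p,b} \<in> E \<and> {p,c} \<in> E)"
    consider (n) "{b,p} \<notin> E" "{p,c} \<notin> E" | (b) "{b,p} \<in> E" "{p,c} \<notin> E"
      | (c) "{b,p} \<notin> E" "{p,c} \<in> E" using neg pb by metis
    thus False
    proof cases
      case n
      have all: "\<forall>f\<in>E. f \<inter> \<Union>N = {} \<longrightarrow> f = {b,c}"
      proof (intro ballI impI)
        fix f assume f: "f \<in> E" "f \<inter> \<Union>N = {}"
        have "f = {b,c} \<or> f = {b,p} \<or> f = {p,c}" using F[OF f] .
        thus "f = {b,c}" using n f(1) by auto
      qed
      have n1: "{b,c} \<notin> M" using c(2) by blast
      have n2: "{b,c} \<notin> N" using cN by blast
      have n3: "equimatchable V (del_edge E {b,c})" using ES bc by blast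
      have "card N = card M" using kill_edge[OF n3 M n1 N(1) n2 all] .
      thus False using cardN by simp
    next
      case b
      note M1 = sw11[OF M ab c(2) ac]
      have all: "\<forall>f\<in>E. f \<inter> \<Union>N = {} \<longrightarrow> b \<in> f"
      proof (intro ballI impI)
        fix f assume f: "f \<in> E" "f \<inter> \<Union>N = {}"
        have "f = {b,c} \<or> f = {b,p} \<or> f = {p,c}" using F[OF f] .
        thus "b \<in> f" using b f(1) by auto
      qed
      have n1: "b \<notin> \<Union>(M - {{a,b}} \<union> {{a,c}})" using M1(3)[of b] c(2) e(3) by blast
      have n3: "equimatchable (del_vertex_V V b) (del_vertex_E E b)" using VS bV by blast
      have "card N = card (M - {{a,b}} \<union> {{a,c}})" using kill_vertex[OF n3 M1(1) n1 N(1) bN all] .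
      thus False using cardN M1(2) by simp
    next
      case c
      have all: "\<forall>f\<in>E. f \<inter> \<Union>N = {} \<longrightarrow> c \<in> f"
      proof (intro ballI impI)
        fix f assume f: "f \<in> E" "f \<inter> \<Union>N = {}"
        have "f = {b,c} \<or> f = {b,p} \<or> f = {p,c}" using F[OF f] .
        thus "c \<in> f" using c f(1) by auto
      qed
      have n3: "equimatchable (del_vertex_V V c) (del_vertex_E E c)" using VS \<open>c \<in> V\<close> by blast
      have "card N = card M" using kill_vertex[OF n3 M \<open>c \<notin> \<Union>M\<close> N(1) cN all] .
      thus False using cardN by simp
    qed
  qed
qed



lemma FL:
  assumes M: "maximal_matching E M" and ab: "{a,b} \<in> M" and c: "c \<in> V" "c \<notin> \<Union>M"
   and ac: "{a,c} \<in> E" and bc: "{b,c} \<in> E" and pq: "{p,q} \<in> M" and ne: "{a,b} \<noteq> {p,q}"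
   and any: "{p,a} \<in> E \<or> {p,b} \<in> E \<or> {p,c} \<in> E \<or> {q,a} \<in> E \<or> {q,b} \<in> E \<or> {q,c} \<in> E"
  shows "{p,a} \<in> E \<and> {p,b} \<in> E \<and> {p,c} \<in> E \<and> {q,a} \<in> E \<and> {q,b} \<in> E \<and> {q,c} \<in> E"
proof -
  have e: "a \<noteq> b" "a \<in> \<Union>M" "b \<in> \<Union>M" "{a,b} \<in> E" using Medge[OF M ab] by auto
  have e2: "p \<noteq> q" "p \<in> \<Union>M" "q \<in> \<Union>M" using Medge[OF M pq] by auto
  have ba: "{b,a} \<in> M" using ab by (simp add: insert_commute)
  have qp: "{q,p} \<in> M" using pq by (simp add: insert_commute)
  have ne2: "{b,a} \<noteq> {p,q}" using ne by (simp add: insert_commute)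
  have ne3: "{a,b} \<noteq> {q,p}" using ne by (simp add: insert_commute)
  have ne4: "{b,a} \<noteq> {q,p}" using ne by (simp add: insert_commute)
  have R1: "{a,q} \<in> E \<Longrightarrow> {p,b} \<in> E \<and> {p,c} \<in> E" using TL[OF M ab c ac bc pq ne] .
  have R2: "{b,q} \<in> E \<Longrightarrow> {p,a} \<in> E \<and> {p,c} \<in> E" using TL[OF M ba c bc ac pq ne2] .
  have R3: "{a,p} \<in> E \<Longrightarrow> {q,b} \<in> E \<and> {q,c} \<in> E" using TL[OF M ab c ac bc qp ne3] .
  have R4: "{b,p} \<in> E \<Longrightarrow> {q,a} \<in> E \<and> {q,c} \<in> E" using TL[OF M ba c bc ac qp ne4] .
  define M1 where "M1 = M - {{a,b}} \<union> {{a,c}}"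
  note S = sw11[OF M ab c(2) ac, folded M1_def]
  have ca1: "{c,a} \<in> M1" unfolding M1_def by (simp add: insert_commute)
  have b1: "b \<notin> \<Union>M1" using S(3)[of b] c(2) e(3) by blast
  have bV: "b \<in> V" using edgeV e(4) by blast
  have cb: "{c,b} \<in> E" using bc by (simp add: insert_commute)
  have pq1: "{p,q} \<in> M1" "{q,p} \<in> M1" using pq qp ne ne3 unfolding M1_def by auto
  have n1: "{c,a} \<noteq> {p,q}" "{c,a} \<noteq> {q,p}" using c(2) e2 by auto
  have R5: "{c,q} \<in> E \<Longrightarrow> {p,a} \<in> E \<and> {p,b} \<in> E" using TL[OF S(1) ca1 bV b1 cb e(4) pq1(1) n1(1)] .
  have R6: "{c,p} \<in> E \<Longrightarrow> {q,a} \<in> E \<and> {q,b} \<in> E" using TL[OF S(1) ca1 bV b1 cb e(4) pq1(2) n1(2)] .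
  have C: "{p,a} \<in> E \<longleftrightarrow> {a,p} \<in> E" "{p,b} \<in> E \<longleftrightarrow> {b,p} \<in> E" "{p,c} \<in> E \<longleftrightarrow> {c,p} \<in> E"
    "{q,a} \<in> E \<longleftrightarrow> {a,q} \<in> E" "{q,b} \<in> E \<longleftrightarrow> {b,q} \<in> E" "{q,c} \<in> E \<longleftrightarrow> {c,q} \<in> E"
    using ecomm by blast+
  show ?thesis using any R1 R2 R3 R4 R5 R6 C by blast
qed

end

context gr begin
lemma partner: "matching E' M \<Longrightarrow> E' \<subseteq> E \<Longrightarrow> s \<in> e \<Longrightarrow> e \<in> M \<Longrightarrow> \<exists>s'. e = {s,s'}"
proof -
  assume a: "matching E' M" "E' \<subseteq> E" "s \<in> e" "e \<in> M"
  have "e \<in> E" using a match_sub by blast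
  then obtain x y where "e = {x,y}" using edge_form by blast
  thus ?thesis using a(3) by (auto simp: insert_commute)
qed
end

context eqg begin
lemma closed_all:
  assumes "u \<in> S" "u \<in> V" "\<And>s t. s \<in> S \<Longrightarrow> {s,t} \<in> E \<Longrightarrow> t \<in> S"
  shows "V \<subseteq> S"
proof
  fix v assume v: "v \<in> V"
  have "(u,v) \<in> {(x,y). {x,y} \<in> E}\<^sup>*" using CONN assms(2) v unfolding connected_graph_def by blast
  thus "v \<in> S"
  proof (induction rule: rtrancl_induct)
    case base thus ?case using assms(1) .
  next
    case (step y z) thus ?case using assms(3) by blast
  qed
qed
end

context vsg begin

lemma Main:
  assumes M: "maximal_matching E M" and xy: "{x,y} \<in> M" and u: "u \<in> V" "u \<notin> \<Union>M"
    and xu: "{x,u} \<in> E" and yu: "{y,u} \<in> E"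
  shows "(\<forall>v\<in>V. v \<noteq> u \<longrightarrow> {u,v} \<in> E) \<and> V = insert u (\<Union>M)"
proof -
  have m: "matching E M" using max_match[OF M] .
  define S where "S = insert u (\<Union>{e \<in> M. \<forall>z\<in>e. {z,u} \<in> E})"
  have inS: "t \<in> S" if "{t,t'} \<in> M" "{t,u} \<in> E" "{t',u} \<in> E" for t t'
    using that unfolding S_def by blast
  have closed: "t \<in> S" if s: "s \<in> S" and st: "{s,t} \<in> E" for s t
  proof (cases "t \<in> \<Union>M")
    case False
    have sM: "s \<in> \<Union>M" using max_edge[OF M st] False by blast
    hence "s \<noteq> u" using u by blast
    then obtain e where e: "e \<in> M" "s \<in> e" "\<forall>z\<in>e. {z,u} \<in> E" using s unfolding S_def by blast
    obtain s' where s': "e = {s,s'}" using partner[OF m subset_refl e(2) e(1)] by blast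
    have "t = u"
    proof (rule ccontr)
      assume "t \<noteq> u"
      have "{s',u} \<in> E" using e(3) s' by simp
      thus False using aug12[OF M e(1)[unfolded s'] False u(2) \<open>t \<noteq> u\<close> st] by simp
    qed
    thus ?thesis unfolding S_def by simp
  next
    case True
    then obtain e' where e': "e' \<in> M" "t \<in> e'" by blast
    obtain t' where t': "e' = {t,t'}" using partner[OF m subset_refl e'(2) e'(1)] by blast
    have tt: "{t,t'} \<in> M" using e' t' by simp
    show ?thesis
    proof (cases "s = u")
      case True
      show ?thesis
      proof (cases "{t,t'} = {x,y}")
        case True
        hence "{t,u} \<in> E \<and> {t',u} \<in> E" using xu yu by (auto simp: doubleton_eq_iff)
        thus ?thesis using inS tt by blast
      next
        case False
        hence ne: "{x,y} \<noteq> {t,t'}" by simp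
        have "{t,u} \<in> E" using st True ecomm by blast
        hence "{t,u} \<in> E \<and> {t',u} \<in> E" using FL[OF M xy u xu yu tt ne] by blast
        thus ?thesis using inS tt by blast
      qed
    next
      case False
      then obtain e where e: "e \<in> M" "s \<in> e" "\<forall>z\<in>e. {z,u} \<in> E" using s unfolding S_def by blast
      obtain s' where s': "e = {s,s'}" using partner[OF m subset_refl e(2) e(1)] by blast
      have ss: "{s,s'} \<in> M" using e s' by simp
      have su: "{s,u} \<in> E" "{s',u} \<in> E" using e(3) s' by auto
      show ?thesis
      proof (cases "{t,t'} = {s,s'}")
        case True
        hence "{t,u} \<in> E \<and> {t',u} \<in> E" using su by (auto simp: doubleton_eq_iff)
        thus ?thesis using inS tt by blast
      next
        case False
        hence ne: "{s,s'} \<noteq> {t,t'}" by simp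
        have "{t,s} \<in> E" using st ecomm by blast
        hence "{t,u} \<in> E \<and> {t',u} \<in> E" using FL[OF M ss u su(1) su(2) tt ne] by blast
        thus ?thesis using inS tt by blast
      qed
    qed
  qed
  have VS': "V \<subseteq> S" by (rule closed_all[of u S]) (use u closed in \<open>auto simp: S_def\<close>)
  have c1: "\<forall>v\<in>V. v \<noteq> u \<longrightarrow> {u,v} \<in> E"
  proof (intro ballI impI)
    fix v assume "v \<in> V" "v \<noteq> u"
    hence "v \<in> \<Union>{e \<in> M. \<forall>z\<in>e. {z,u} \<in> E}" using VS' unfolding S_def by blast
    hence "{v,u} \<in> E" by blast
    thus "{u,v} \<in> E" using ecomm by blast
  qed
  have "V \<subseteq> insert u (\<Union>M)" using VS' unfolding S_def by blast
  moreover have "\<Union>M \<subseteq> V" using cov_V[OF m subset_refl] .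
  ultimately have "V = insert u (\<Union>M)" using u by blast
  thus ?thesis using c1 by blast
qed


lemma caseB:
  assumes M: "maximal_matching E M" and xy: "{x,y} \<in> M" and w: "w1 \<notin> \<Union>M" "w2 \<notin> \<Union>M"
    and xw: "{x,w1} \<in> E" and yw: "{y,w2} \<in> E"
  shows "complete_graph V E \<and> odd (card V)"
proof -
  have m: "matching E M" using max_match[OF M] .
  have "w1 = w2" using aug12[OF M xy w(1) w(2) _ xw yw] by blast
  hence yw1: "{y,w1} \<in> E" using yw by simp
  have uV: "w1 \<in> V" using edgeV xw by blast
  note Mn = Main[OF M xy uV w(1) xw yw1]
  have univ: "\<forall>v\<in>V. v \<noteq> a \<longrightarrow> {a,v} \<in> E" if aV: "a \<in> V" for a
  proof (cases "a = w1")
    case True thus ?thesis using Mn by blast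
  next
    case False
    hence "a \<in> \<Union>M" using Mn aV by blast
    then obtain e where e: "e \<in> M" "a \<in> e" by blast
    obtain b where b: "e = {a,b}" using partner[OF m subset_refl e(2) e(1)] by blast
    have ba: "{b,a} \<in> M" using e b by (simp add: insert_commute)
    have abE2: "{b,a} \<in> E" using Medge[OF M ba] by blast
    have abE1: "{a,b} \<in> E" using abE2 ecomm by blast
    have bV: "b \<in> V" using edgeV[OF abE2] by blast
    have "b \<noteq> w1" using Medge[OF M ba] w(1) by blast
    hence "{w1,b} \<in> E" using Mn bV by blast
    hence bw': "{b,w1} \<in> E" using ecomm by blast
    have bw2: "{w1,a} \<in> E" using Mn aV False by blast
    define M' where "M' = M - {{b,a}} \<union> {{b,w1}}"
    note S = sw11[OF M ba w(1) bw', folded M'_def]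
    have aM': "a \<notin> \<Union>M'" using S(3)[of a] False by blast
    have bwM: "{b,w1} \<in> M'" unfolding M'_def by simp
    show ?thesis using Main[OF S(1) bwM aV aM' abE2 bw2] by blast
  qed
  have "complete_graph V E" unfolding complete_graph_def
  proof
    show "E \<subseteq> {{u, v} |u v. u \<in> V \<and> v \<in> V \<and> u \<noteq> v}"
    proof
      fix e assume "e \<in> E"
      then obtain s t where "e = {s,t}" "s \<noteq> t" using edge_form by blast
      moreover have "s \<in> V \<and> t \<in> V" using edgeV \<open>e \<in> E\<close> calculation(1) by simp
      ultimately show "e \<in> {{u, v} |u v. u \<in> V \<and> v \<in> V \<and> u \<noteq> v}" by blast
    qed
    show "{{u, v} |u v. u \<in> V \<and> v \<in> V \<and> u \<noteq> v} \<subseteq> E"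
    proof
      fix e assume "e \<in> {{u, v} |u v. u \<in> V \<and> v \<in> V \<and> u \<noteq> v}"
      then obtain u v where uv: "e = {u,v}" "u \<in> V" "v \<in> V" "u \<noteq> v" by blast
      have "{u,v} \<in> E" using univ[OF uv(2)] uv(3,4) by simp
      thus "e \<in> E" using uv(1) by simp
    qed
  qed
  moreover have "card V = Suc (2 * card M)"
  proof -
    have "V = insert w1 (\<Union>M)" using Mn by blast
    moreover have "finite (\<Union>M)" using cov_V[OF m subset_refl] finV finite_subset by blast
    ultimately have "card V = Suc (card (\<Union>M))" using w(1) by simp
    thus ?thesis using card_cov[OF m subset_refl] by simp
  qed
  ultimately show ?thesis by simp
qed

end

context gr begin
definition hasU where "hasU M z \<longleftrightarrow> (\<exists>w. w \<notin> \<Union>M \<and> {z,w} \<in> E)"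

lemma bip_side:
  assumes "bipartite V E"
  obtains P where "\<And>s t. {s,t} \<in> E \<Longrightarrow> s \<in> P \<longleftrightarrow> t \<notin> P"
proof -
  obtain A B where AB: "A \<inter> B = {}" "\<forall>e\<in>E. \<exists>a\<in>A. \<exists>b\<in>B. e = {a,b}"
    using assms unfolding bipartite_def by blast
  have "s \<in> A \<longleftrightarrow> t \<notin> A" if st: "{s,t} \<in> E" for s t
  proof -
    obtain a b where ab: "a \<in> A" "b \<in> B" "{s,t} = {a,b}" using AB(2) st by blast
    have "b \<notin> A" using AB(1) ab(2) by blast
    from ab(3) have "(s = a \<and> t = b) \<or> (s = b \<and> t = a)" by (auto simp: doubleton_eq_iff)
    thus ?thesis using ab(1) \<open>b \<notin> A\<close> by blast
  qed
  thus ?thesis using that by blast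
qed

lemma bip_tri: "bipartite V E \<Longrightarrow> {a,b} \<in> E \<Longrightarrow> {b,c} \<in> E \<Longrightarrow> {c,a} \<in> E \<Longrightarrow> False"
proof -
  assume "bipartite V E" "{a,b} \<in> E" "{b,c} \<in> E" "{c,a} \<in> E"
  moreover obtain P where "\<And>s t. {s,t} \<in> E \<Longrightarrow> s \<in> P \<longleftrightarrow> t \<notin> P" using bip_side calculation(1) by blast
  ultimately show False by blast
qed

lemma bip_c5: "bipartite V E \<Longrightarrow> {a,b} \<in> E \<Longrightarrow> {b,c} \<in> E \<Longrightarrow> {c,d} \<in> E \<Longrightarrow> {d,e} \<in> E \<Longrightarrow> {e,a} \<in> E \<Longrightarrow> False"
proof -
  assume "bipartite V E" "{a,b} \<in> E" "{b,c} \<in> E" "{c,d} \<in> E" "{d,e} \<in> E" "{e,a} \<in> E"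
  moreover obtain P where "\<And>s t. {s,t} \<in> E \<Longrightarrow> s \<in> P \<longleftrightarrow> t \<notin> P" using bip_side calculation(1) by blast
  ultimately show False by blast
qed
end

context esg begin

lemma type0:
  assumes M: "maximal_matching E M" and xy: "{x,y} \<in> M" and nx: "\<not> hasU M x" and ny: "\<not> hasU M y"
  shows "V = {x,y}"
proof -
  have m: "matching E M" using max_match[OF M] .
  define N where "N = M - {{x,y}}"
  note N = sw10[OF M xy, folded N_def]
  have xyE: "{x,y} \<in> E" using Medge[OF M xy] by blast
  have nU: "t \<noteq> x \<and> t \<noteq> y" if "{s,t} \<in> E" "s \<notin> \<Union>M" for s t
  proof -
    have "{t,s} \<in> E" using that(1) ecomm by blast
    hence "hasU M t" using that(2) unfolding hasU_def by blast
    thus ?thesis using nx ny by blast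
  qed
  have allN: "\<forall>f\<in>E. f \<inter> \<Union>N = {} \<longrightarrow> f = {x,y}"
  proof (intro ballI impI)
    fix f assume f: "f \<in> E" "f \<inter> \<Union>N = {}"
    obtain s t where st: "f = {s,t}" "s \<noteq> t" using edge_form f(1) by blast
    have E1: "{s,t} \<in> E" "{t,s} \<in> E" using f(1) st(1) ecomm by blast+
    have "s \<notin> \<Union>N" "t \<notin> \<Union>N" using f(2) st by auto
    hence s': "s \<notin> \<Union>M \<or> s = x \<or> s = y" "t \<notin> \<Union>M \<or> t = x \<or> t = y" using N(3)[of s] N(3)[of t] by blast+
    have "s \<in> \<Union>M" 
    proof (rule ccontr)
      assume "s \<notin> \<Union>M" 
      hence "t \<in> \<Union>M" using max_edge[OF M E1(1)] by blast
      hence "t = x \<or> t = y" using s'(2) by blast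
      thus False using nU[OF E1(1) \<open>s \<notin> \<Union>M\<close>] by blast
    qed
    moreover have "t \<in> \<Union>M" 
    proof (rule ccontr)
      assume "t \<notin> \<Union>M" 
      hence "s \<in> \<Union>M" using max_edge[OF M E1(1)] by blast
      hence "s = x \<or> s = y" using s'(1) by blast
      thus False using nU[OF E1(2) \<open>t \<notin> \<Union>M\<close>] by blast
    qed
    ultimately have "(s = x \<or> s = y) \<and> (t = x \<or> t = y)" using s' by blast
    thus "f = {x,y}" using st by (auto simp: insert_commute)
  qed
  have inc: "x \<notin> f \<and> y \<notin> f" if f: "f \<in> E" "f \<noteq> {x,y}" for f
  proof (rule ccontr)
    assume meet: "\<not> (x \<notin> f \<and> y \<notin> f)"
    have "matching E {f}" using f(1) unfolding matching_def by simp
    then obtain M' where M': "maximal_matching E M'" "{f} \<subseteq> M'" using extend[OF subset_refl] by blast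
    have n1: "{x,y} \<notin> M'"
    proof
      assume "{x,y} \<in> M'"
      moreover have "f \<in> M'" using M'(2) by simp
      ultimately have "f = {x,y}" using m_disj[OF max_match[OF M'(1)]] meet by blast
      thus False using f(2) by simp
    qed
    have n2: "{x,y} \<notin> N" unfolding N_def by simp
    have n3: "equimatchable V (del_edge E {x,y})" using ES xyE by blast
    have "card N = card M'" using kill_edge[OF n3 M'(1) n1 N(1) n2 allN] .
    moreover have "card M' = card M" using EQ M M'(1) unfolding equimatchable_def by blast
    ultimately show False using N(2) by simp
  qed
  have cl: "t \<in> {x,y}" if "s \<in> {x,y}" "{s,t} \<in> E" for s t
  proof -
    have "{s,t} = {x,y}" using inc[OF that(2)] that(1) by blast
    thus ?thesis by blast
  qed
  have xV: "x \<in> V" "y \<in> V" using edgeV[OF xyE] by auto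
  have "V \<subseteq> {x,y}" using closed_all[of x "{x,y}"] xV cl by blast
  thus ?thesis using xV by blast
qed


lemma BB:
  assumes M: "maximal_matching E M"
    and T0: "\<forall>x y. {x,y} \<in> M \<longrightarrow> hasU M x \<or> hasU M y"
    and H: "(\<forall>v\<in>V. equimatchable (del_vertex_V V v) (del_vertex_E E v)) \<or> bipartite V E"
    and st: "{s,t} \<in> E" and ns: "\<not> (s \<in> \<Union>M \<and> hasU M s)" and nt: "\<not> (t \<in> \<Union>M \<and> hasU M t)"
  shows False
proof -
  have m: "matching E M" using max_match[OF M] .
  have ts: "{t,s} \<in> E" using st ecomm by blast
  have sne: "s \<noteq> t" using edge_ne[OF st] .
  have sM: "s \<in> \<Union>M"
  proof (rule ccontr)
    assume a: "s \<notin> \<Union>M"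
    hence "t \<in> \<Union>M" using max_edge[OF M st] by blast
    moreover have "hasU M t" using a ts unfolding hasU_def by blast
    ultimately show False using nt by blast
  qed
  have tM: "t \<in> \<Union>M"
  proof (rule ccontr)
    assume a: "t \<notin> \<Union>M"
    hence "s \<in> \<Union>M" using max_edge[OF M st] by blast
    moreover have "hasU M s" using a st unfolding hasU_def by blast
    ultimately show False using ns by blast
  qed
  have hs: "\<not> hasU M s" using ns sM by blast
  have ht: "\<not> hasU M t" using nt tM by blast
  obtain e1 where e1: "e1 \<in> M" "s \<in> e1" using sM by blast
  obtain s' where s': "{s,s'} \<in> M" using partner[OF m subset_refl e1(2) e1(1)] e1(1) by blast
  obtain e2 where e2: "e2 \<in> M" "t \<in> e2" using tM by blast
  obtain t' where t': "{t,t'} \<in> M" using partner[OF m subset_refl e2(2) e2(1)] e2(1) by blast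
  have hs': "hasU M s'" using T0 s' hs by blast
  have ht': "hasU M t'" using T0 t' ht by blast
  have ne: "{s,s'} \<noteq> {t,t'}"
  proof
    assume "{s,s'} = {t,t'}"
    hence "t = s'" using sne by (auto simp: doubleton_eq_iff)
    thus False using hs' ht by simp
  qed
  have ne2: "{t,t'} \<noteq> {s,s'}" using ne by simp
  obtain w where w: "w \<notin> \<Union>M" "{s',w} \<in> E" using hs' unfolding hasU_def by blast
  obtain w' where w': "w' \<notin> \<Union>M" "{t',w'} \<in> E" using ht' unfolding hasU_def by blast
  have u1: "w2 = w'" if "w2 \<notin> \<Union>M" "{s',w2} \<in> E" for w2
    using aug23[OF M s' t' ne that(1) w'(1) _ st that(2) w'(2)] by blast
  have u2: "w2 = w" if "w2 \<notin> \<Union>M" "{t',w2} \<in> E" for w2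
    using aug23[OF M t' s' ne2 that(1) w(1) _ ts that(2) w(2)] by blast
  have ww: "w = w'" using u1[OF w] .
  have ss': "s \<noteq> s'" "s' \<in> \<Union>M" using Medge[OF M s'] by auto
  have tt': "t \<noteq> t'" "t' \<in> \<Union>M" using Medge[OF M t'] by auto
  have di: "s \<noteq> t" "s \<noteq> t'" "s' \<noteq> t" "s' \<noteq> t'" using Mdist[OF M s' t' ne] by auto
  show False
  proof (cases "{s',t'} \<in> E")
    case True
    have s'2: "{s',s} \<in> M" "{t',t} \<in> M" using s' t' by (simp_all add: insert_commute)
    have ne3: "{s',s} \<noteq> {t',t}" using ne by (simp add: insert_commute)
    define N where "N = M - {{s',s},{t',t}} \<union> {{s',t'}}"
    note N = sw22[OF M s'2(1) s'2(2) ne3 True, folded N_def]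
    have all: "\<forall>f\<in>E. f \<inter> \<Union>N = {} \<longrightarrow> f = {s,t}"
    proof (intro ballI impI)
      fix f assume f: "f \<in> E" "f \<inter> \<Union>N = {}"
      obtain a1 a2 where aa: "f = {a1,a2}" "a1 \<noteq> a2" using edge_form f(1) by blast
      have E1: "{a1,a2} \<in> E" "{a2,a1} \<in> E" using f(1) aa(1) ecomm by blast+
      have "a1 \<notin> \<Union>N" "a2 \<notin> \<Union>N" using f(2) aa by auto
      hence c: "a1 \<notin> \<Union>M \<or> a1 = s \<or> a1 = t" "a2 \<notin> \<Union>M \<or> a2 = s \<or> a2 = t"
        using N(3)[of a1] N(3)[of a2] by blast+
      have K: "a \<notin> \<Union>M \<Longrightarrow> {b,a} \<in> E \<Longrightarrow> b \<noteq> s \<and> b \<noteq> t" for a b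
        using hs ht unfolding hasU_def by blast
      have "a1 \<in> \<Union>M"
      proof (rule ccontr)
        assume a: "a1 \<notin> \<Union>M"
        hence "a2 \<in> \<Union>M" using max_edge[OF M E1(1)] by blast
        thus False using c(2) K[OF a E1(2)] by blast
      qed
      moreover have "a2 \<in> \<Union>M"
      proof (rule ccontr)
        assume a: "a2 \<notin> \<Union>M"
        hence "a1 \<in> \<Union>M" using max_edge[OF M E1(1)] by blast
        thus False using c(1) K[OF a E1(1)] by blast
      qed
      ultimately have "(a1 = s \<or> a1 = t) \<and> (a2 = s \<or> a2 = t)" using c by blast
      thus "f = {s,t}" using aa by (auto simp: insert_commute)
    qed
    have n1: "{s,t} \<notin> M"
    proof
      assume "{s,t} \<in> M"
      hence "{s,t} = {s,s'}" using m_disj[OF m _ s'] by blast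
      hence "t = s'" using sne by (auto simp: doubleton_eq_iff)
      thus False using di by simp
    qed
    have n2: "{s,t} \<notin> N"
    proof
      assume "{s,t} \<in> N" hence "s \<in> \<Union>N" by blast
      thus False using N(3)[of s] by blast
    qed
    have n3: "equimatchable V (del_edge E {s,t})" using ES st by blast
    have "card N = card M" using kill_edge[OF n3 M n1 N(1) n2 all] .
    thus False using N(2) by simp
  next
    case False
    note nst = False
    have wV: "w \<in> V" using edgeV[OF w(2)] by blast
    from H show False
    proof
      assume VS0: "\<forall>v\<in>V. equimatchable (del_vertex_V V v) (del_vertex_E E v)"
      define N where "N = M - {{s,s'},{t,t'}} \<union> {{s,t}}"
      note N = sw22[OF M s' t' ne st, folded N_def]
      have K: "a = w" if "{b,a} \<in> E" "a \<notin> \<Union>M" "b = s' \<or> b = t'" for a b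
        using that u1 u2 ww by blast
      have all: "\<forall>f\<in>E. f \<inter> \<Union>N = {} \<longrightarrow> w \<in> f"
      proof (intro ballI impI)
        fix f assume f: "f \<in> E" "f \<inter> \<Union>N = {}"
        obtain a1 a2 where aa: "f = {a1,a2}" "a1 \<noteq> a2" using edge_form f(1) by blast
        have E1: "{a1,a2} \<in> E" "{a2,a1} \<in> E" using f(1) aa(1) ecomm by blast+
        have "a1 \<notin> \<Union>N" "a2 \<notin> \<Union>N" using f(2) aa by auto
        hence c: "a1 \<notin> \<Union>M \<or> a1 = s' \<or> a1 = t'" "a2 \<notin> \<Union>M \<or> a2 = s' \<or> a2 = t'"
          using N(3)[of a1] N(3)[of a2] by blast+
        show "w \<in> f"
        proof (cases "a1 \<in> \<Union>M")
          case False
          hence "a2 \<in> \<Union>M" using max_edge[OF M E1(1)] by blast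
          hence "a2 = s' \<or> a2 = t'" using c(2) by blast
          hence "a1 = w" using K[OF E1(2) False] by blast
          thus ?thesis using aa by simp
        next
          case True
          hence a1c: "a1 = s' \<or> a1 = t'" using c(1) by blast
          show ?thesis
          proof (cases "a2 \<in> \<Union>M")
            case False
            hence "a2 = w" using K[OF E1(1) False a1c] by blast
            thus ?thesis using aa by simp
          next
            case True
            hence "a2 = s' \<or> a2 = t'" using c(2) by blast
            hence "{a1,a2} = {s',t'}" using a1c aa(2) by (auto simp: insert_commute)
            thus ?thesis using E1(1) nst by simp
          qed
        qed
      qed
      have wN: "w \<notin> \<Union>N" using N(3)[of w] w(1) by blast
      have n3: "equimatchable (del_vertex_V V w) (del_vertex_E E w)" using VS0 wV by blast
      have "card N = card M" using kill_vertex[OF n3 M w(1) N(1) wN all] .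
      thus False using N(2) by simp
    next
      assume B: "bipartite V E"
      have "{t,t'} \<in> E" using Medge[OF M t'] by blast
      moreover have "{t',w} \<in> E" using w'(2) ww by simp
      moreover have "{w,s'} \<in> E" using w(2) ecomm by blast
      moreover have "{s',s} \<in> E" using Medge[OF M s'] ecomm by blast
      ultimately show False using bip_c5[OF B st] by blast
    qed
  qed
qed

lemma AA:
  assumes M: "maximal_matching E M"
    and T0: "\<forall>x y. {x,y} \<in> M \<longrightarrow> hasU M x \<or> hasU M y"
    and T2: "\<forall>x y. {x,y} \<in> M \<longrightarrow> \<not> (hasU M x \<and> hasU M y)"
    and H: "(\<forall>v\<in>V. equimatchable (del_vertex_V V v) (del_vertex_E E v)) \<or> bipartite V E"
    and st: "{s,t} \<in> E" and hs: "s \<in> \<Union>M" "hasU M s" and ht: "t \<in> \<Union>M" "hasU M t"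
  shows False
proof -
  have m: "matching E M" using max_match[OF M] .
  have sne: "s \<noteq> t" using edge_ne[OF st] .
  have nM: "{s,t} \<notin> M" using T2 hs ht by blast
  obtain e1 where e1: "e1 \<in> M" "s \<in> e1" using hs by blast
  obtain s' where s': "{s,s'} \<in> M" using partner[OF m subset_refl e1(2) e1(1)] e1(1) by blast
  obtain e2 where e2: "e2 \<in> M" "t \<in> e2" using ht by blast
  obtain t' where t': "{t,t'} \<in> M" using partner[OF m subset_refl e2(2) e2(1)] e2(1) by blast
  have ne: "{s,s'} \<noteq> {t,t'}"
  proof
    assume "{s,s'} = {t,t'}"
    hence "t = s'" using sne by (auto simp: doubleton_eq_iff)
    thus False using nM s' by simp
  qed
  have hs': "\<not> hasU M s'" using T2 s' hs by blast
  have ht': "\<not> hasU M t'" using T2 t' ht by blast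
  have nst: "{s',t'} \<notin> E"
  proof
    assume "{s',t'} \<in> E"
    thus False using BB[OF M T0 H] hs' ht' by blast
  qed
  define N where "N = M - {{s,s'},{t,t'}} \<union> {{s,t}}"
  note N = sw22[OF M s' t' ne st, folded N_def]
  have all: "\<forall>f\<in>E. f \<inter> \<Union>N \<noteq> {}"
  proof (intro ballI notI)
    fix f assume f: "f \<in> E" "f \<inter> \<Union>N = {}"
    obtain a1 a2 where aa: "f = {a1,a2}" "a1 \<noteq> a2" using edge_form f(1) by blast
    have E1: "{a1,a2} \<in> E" "{a2,a1} \<in> E" using f(1) aa(1) ecomm by blast+
    have "a1 \<notin> \<Union>N" "a2 \<notin> \<Union>N" using f(2) aa by auto
    hence c: "a1 \<notin> \<Union>M \<or> a1 = s' \<or> a1 = t'" "a2 \<notin> \<Union>M \<or> a2 = s' \<or> a2 = t'"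
      using N(3)[of a1] N(3)[of a2] by blast+
    have K: "a \<notin> \<Union>M \<Longrightarrow> {b,a} \<in> E \<Longrightarrow> b \<noteq> s' \<and> b \<noteq> t'" for a b
      using hs' ht' unfolding hasU_def by blast
    have "a1 \<in> \<Union>M"
    proof (rule ccontr)
      assume a: "a1 \<notin> \<Union>M"
      hence "a2 \<in> \<Union>M" using max_edge[OF M E1(1)] by blast
      thus False using c(2) K[OF a E1(2)] by blast
    qed
    moreover have "a2 \<in> \<Union>M"
    proof (rule ccontr)
      assume a: "a2 \<notin> \<Union>M"
      hence "a1 \<in> \<Union>M" using max_edge[OF M E1(1)] by blast
      thus False using c(1) K[OF a E1(1)] by blast
    qed
    ultimately have "(a1 = s' \<or> a1 = t') \<and> (a2 = s' \<or> a2 = t')" using c by blast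
    hence "{a1,a2} = {s',t'}" using aa(2) by (auto simp: insert_commute)
    thus False using E1(1) nst by simp
  qed
  have "card N = card M" using kill_none[OF M N(1) all] .
  thus False using N(2) by simp
qed

lemma caseC:
  assumes M: "maximal_matching E M"
    and T0: "\<forall>x y. {x,y} \<in> M \<longrightarrow> hasU M x \<or> hasU M y"
    and T2: "\<forall>x y. {x,y} \<in> M \<longrightarrow> \<not> (hasU M x \<and> hasU M y)"
    and H: "(\<forall>v\<in>V. equimatchable (del_vertex_V V v) (del_vertex_E E v)) \<or> bipartite V E"
  shows "bipartite V E"
proof -
  define A where "A = {a \<in> \<Union>M. hasU M a}"
  have AV: "A \<subseteq> V" using cov_V[OF max_match[OF M] subset_refl] unfolding A_def by blast
  have "\<exists>a\<in>A. \<exists>b\<in>V - A. e = {a,b}" if e: "e \<in> E" for e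
  proof -
    obtain s t where st: "e = {s,t}" "s \<noteq> t" using edge_form e by blast
    have E1: "{s,t} \<in> E" "{t,s} \<in> E" using e st(1) ecomm by blast+
    have V1: "s \<in> V" "t \<in> V" using edgeV E1(1) by blast+
    show ?thesis
    proof (cases "s \<in> A")
      case True
      have "t \<notin> A" using AA[OF M T0 T2 H E1(1)] True unfolding A_def by blast
      thus ?thesis using True V1 st(1) by blast
    next
      case False
      have "t \<in> A" using BB[OF M T0 H E1(1)] False unfolding A_def by blast
      thus ?thesis using False V1 st(1) by (auto simp: insert_commute)
    qed
  qed
  thus ?thesis unfolding bipartite_def using AV by (intro exI[of _ A] exI[of _ "V - A"]) blast
qed

end

context vsg begin

lemma fwd: "(complete_graph V E \<and> odd (card V)) \<or> bipartite V E"
proof -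
  have "matching E {}" unfolding matching_def by simp
  then obtain M where M: "maximal_matching E M" using extend[OF subset_refl] by blast
  show ?thesis
  proof (cases "\<exists>x y. {x,y} \<in> M \<and> \<not> hasU M x \<and> \<not> hasU M y")
    case True
    then obtain x y where xy: "{x,y} \<in> M" "\<not> hasU M x" "\<not> hasU M y" by blast
    have V2: "V = {x,y}" using type0[OF M xy] .
    have bip: "\<exists>a\<in>{x}. \<exists>b\<in>{y}. e = {a,b}" if e: "e \<in> E" for e
    proof -
      obtain s t where st: "e = {s,t}" "s \<noteq> t" using edge_form e by blast
      have "s \<in> V \<and> t \<in> V" using edgeV e st(1) by simp
      hence "e = {x,y}" using V2 st by (auto simp: insert_commute)
      thus ?thesis by blast
    qed
    have "x \<noteq> y" using Medge[OF M xy(1)] by blast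
    hence "bipartite V E" unfolding bipartite_def using V2 bip
      by (intro exI[of _ "{x}"] exI[of _ "{y}"]) blast
    thus ?thesis by simp
  next
    case F0: False
    show ?thesis
    proof (cases "\<exists>x y. {x,y} \<in> M \<and> hasU M x \<and> hasU M y")
      case True
      then obtain x y w1 w2 where h: "{x,y} \<in> M" "w1 \<notin> \<Union>M" "{x,w1} \<in> E" "w2 \<notin> \<Union>M" "{y,w2} \<in> E"
        unfolding hasU_def by blast
      thus ?thesis using caseB[OF M h(1) h(2) h(4) h(3) h(5)] by simp
    next
      case False
      have "bipartite V E" using caseC[OF M] F0 False VS by blast
      thus ?thesis by simp
    qed
  qed
qed

end

context gr begin

lemma edge_partner: "f \<in> E \<Longrightarrow> v \<in> f \<Longrightarrow> \<exists>y. f = {v,y}"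
proof -
  assume a: "f \<in> E" "v \<in> f"
  then obtain x y where "f = {x,y}" using edge_form by blast
  thus ?thesis using a(2) by (auto simp: insert_commute)
qed

lemma compl_edge: "complete_graph V E \<Longrightarrow> a \<in> V \<Longrightarrow> b \<in> V \<Longrightarrow> a \<noteq> b \<Longrightarrow> {a,b} \<in> E"
  unfolding complete_graph_def by blast

lemma unc_count:
  assumes N: "matching E' N" "E' \<subseteq> E" "\<Union>N \<subseteq> X" "X \<subseteq> V"
  shows "card X = 2 * card N + card (X - \<Union>N)"
proof -
  have fX: "finite X" using finV N(4) finite_subset by blast
  have "card X = card (\<Union>N) + card (X - \<Union>N)"
    using card_Diff_subset[OF finite_subset[OF N(3) fX] N(3)] card_mono[OF fX N(3)] by simp
  thus ?thesis using card_cov[OF N(1) N(2)] by simp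
qed

lemma K_vs:
  assumes K: "complete_graph V E" and od: "odd (card V)" and v: "v \<in> V"
  shows "equimatchable W (del_vertex_E E v)"
proof -
  have sub: "del_vertex_E E v \<subseteq> E" by (auto simp: del_vertex_E_def)
  have key: "card V = Suc (2 * card N)" if N: "maximal_matching (del_vertex_E E v) N" for N
  proof -
    have m: "matching (del_vertex_E E v) N" using max_match[OF N] .
    have mx: "\<forall>e\<in>del_vertex_E E v. e \<inter> \<Union>N \<noteq> {}" using maximal_iff[OF sub] N by blast
    have cv: "\<Union>N \<subseteq> V - {v}" using cov_V[OF m sub] match_sub[OF m] by (auto simp: del_vertex_E_def)
    have X: "V - {v} \<subseteq> V" by blast
    note cnt = unc_count[OF m sub cv X]
    have fW: "finite (V - {v} - \<Union>N)" using finV by simp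
    have "\<forall>a1\<in>V - {v} - \<Union>N. \<forall>a2\<in>V - {v} - \<Union>N. a1 = a2"
    proof (intro ballI, rule ccontr)
      fix a1 a2 assume a: "a1 \<in> V - {v} - \<Union>N" "a2 \<in> V - {v} - \<Union>N" "a1 \<noteq> a2"
      have "{a1,a2} \<in> E" using compl_edge[OF K] a by blast
      hence "{a1,a2} \<in> del_vertex_E E v" using a by (auto simp: del_vertex_E_def)
      hence "{a1,a2} \<inter> \<Union>N \<noteq> {}" using mx by blast
      thus False using a by blast
    qed
    hence "card (V - {v} - \<Union>N) \<le> Suc 0" using card_le_Suc0_iff_eq[OF fW] by blast
    moreover have "card (V - {v}) = card V - 1" using v finV by simp
    moreover have "V \<noteq> {}" using v by blast
    hence "card V \<ge> 1" using finV by (simp add: Suc_le_eq card_gt_0_iff)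
    ultimately show ?thesis using cnt od by presburger
  qed
  show ?thesis unfolding equimatchable_def
  proof (intro allI impI)
    fix M M' assume h: "maximal_matching (del_vertex_E E v) M \<and> maximal_matching (del_vertex_E E v) M'"
    have "card V = Suc (2 * card M)" "card V = Suc (2 * card M')" using key h by blast+
    thus "card M = card M'" by simp
  qed
qed

lemma K_es:
  assumes K: "complete_graph V E" and od: "odd (card V)" and e: "e \<in> E"
  shows "equimatchable V (del_edge E e)"
proof -
  have sub: "del_edge E e \<subseteq> E" by (auto simp: del_edge_def)
  have key: "card V = Suc (2 * card N)" if N: "maximal_matching (del_edge E e) N" for N
  proof -
    have m: "matching (del_edge E e) N" using max_match[OF N] .
    have mx: "\<forall>f\<in>del_edge E e. f \<inter> \<Union>N \<noteq> {}" using maximal_iff[OF sub] N by blast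
    have cv: "\<Union>N \<subseteq> V" using cov_V[OF m sub] .
    note cnt = unc_count[OF m sub cv subset_refl]
    have fW: "finite (V - \<Union>N)" using finV by simp
    have pe: "{a1,a2} = e" if a: "a1 \<in> V - \<Union>N" "a2 \<in> V - \<Union>N" "a1 \<noteq> a2" for a1 a2
    proof (rule ccontr)
      assume ne: "{a1,a2} \<noteq> e"
      have "{a1,a2} \<in> E" using compl_edge[OF K] a by blast
      hence "{a1,a2} \<in> del_edge E e" using ne by (auto simp: del_edge_def)
      hence "{a1,a2} \<inter> \<Union>N \<noteq> {}" using mx by blast
      thus False using a by blast
    qed
    have le2: "card (V - \<Union>N) \<le> 2"
    proof (cases "\<exists>z1 z2. z1 \<in> V - \<Union>N \<and> z2 \<in> V - \<Union>N \<and> z1 \<noteq> z2")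
      case True
      then obtain z1 z2 where z: "z1 \<in> V - \<Union>N" "z2 \<in> V - \<Union>N" "z1 \<noteq> z2" by blast
      have "V - \<Union>N \<subseteq> e"
      proof
        fix z assume zW: "z \<in> V - \<Union>N"
        show "z \<in> e"
        proof (cases "z = z1")
          case True thus ?thesis using pe[OF z] by blast
        next
          case False thus ?thesis using pe[OF zW z(1) False] by blast
        qed
      qed
      moreover have "card e = 2" using E_card[OF e] .
      moreover have "finite e" using E_sub[OF e] finV finite_subset by blast
      ultimately show ?thesis using card_mono[of e "V - \<Union>N"] by simp
    next
      case False
      hence "\<forall>a1\<in>V - \<Union>N. \<forall>a2\<in>V - \<Union>N. a1 = a2" by blast
      hence "card (V - \<Union>N) \<le> Suc 0" using card_le_Suc0_iff_eq[OF fW] by blast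
      thus ?thesis by simp
    qed
    thus ?thesis using cnt od by presburger
  qed
  show ?thesis unfolding equimatchable_def
  proof (intro allI impI)
    fix M M' assume h: "maximal_matching (del_edge E e) M \<and> maximal_matching (del_edge E e) M'"
    have "card V = Suc (2 * card M)" "card V = Suc (2 * card M')" using key h by blast+
    thus "card M = card M'" by simp
  qed
qed

end

context eqg begin

lemma vd:
  assumes N: "maximal_matching (del_vertex_E E v) N"
  shows "matching E N" "v \<notin> \<Union>N" "\<forall>f\<in>E. f \<inter> \<Union>N = {} \<longrightarrow> v \<in> f"
    "maximal_matching E N \<or> (\<exists>y. {v,y} \<in> E \<and> y \<notin> \<Union>N \<and> maximal_matching E (insert {v,y} N)
        \<and> card (insert {v,y} N) = Suc (card N))"
proof -
  have sub: "del_vertex_E E v \<subseteq> E" by (auto simp: del_vertex_E_def)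
  have m: "matching (del_vertex_E E v) N" using max_match[OF N] .
  have mx: "\<forall>e\<in>del_vertex_E E v. e \<inter> \<Union>N \<noteq> {}" using maximal_iff[OF sub] N by blast
  have NE: "N \<subseteq> del_vertex_E E v" using match_sub[OF m] .
  show mE: "matching E N" using match_mono[OF m] NE sub by blast
  show vN: "v \<notin> \<Union>N" using NE by (auto simp: del_vertex_E_def)
  show cv: "\<forall>f\<in>E. f \<inter> \<Union>N = {} \<longrightarrow> v \<in> f"
  proof (intro ballI impI, rule ccontr)
    fix f assume "f \<in> E" "f \<inter> \<Union>N = {}" "v \<notin> f"
    hence "f \<in> del_vertex_E E v" by (simp add: del_vertex_E_def)
    thus False using mx \<open>f \<inter> \<Union>N = {}\<close> by blast
  qed
  show "maximal_matching E N \<or> (\<exists>y. {v,y} \<in> E \<and> y \<notin> \<Union>N \<and> maximal_matching E (insert {v,y} N)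
        \<and> card (insert {v,y} N) = Suc (card N))"
  proof (cases "\<forall>f\<in>E. f \<inter> \<Union>N \<noteq> {}")
    case True thus ?thesis using maximal_iff[OF subset_refl] mE by blast
  next
    case False
    then obtain f where f: "f \<in> E" "f \<inter> \<Union>N = {}" by blast
    have vf: "v \<in> f" using cv f by blast
    obtain y where y: "f = {v,y}" using edge_partner[OF f(1) vf] by blast
    have yN: "y \<notin> \<Union>N" using f(2) y by blast
    have fN: "f \<notin> N" using vN vf by blast
    have m2: "matching E (insert f N)" unfolding matching_def
    proof (intro conjI ballI impI)
      show "insert f N \<subseteq> E" using f(1) mE match_sub by blast
      fix a b assume ab: "a \<in> insert f N" "b \<in> insert f N" "a \<noteq> b"
      show "a \<inter> b = {}" using ab f(2) mE unfolding matching_def by blast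
    qed
    have "\<forall>g\<in>E. g \<inter> \<Union>(insert f N) \<noteq> {}"
    proof
      fix g assume g: "g \<in> E"
      show "g \<inter> \<Union>(insert f N) \<noteq> {}"
      proof (cases "v \<in> g")
        case True thus ?thesis using vf by blast
      next
        case False thus ?thesis using cv g by blast
      qed
    qed
    hence "maximal_matching E (insert f N)" using maximal_iff[OF subset_refl] m2 by blast
    moreover have "card (insert f N) = Suc (card N)" using fN match_fin[OF mE subset_refl] by simp
    ultimately show ?thesis using f(1) y yN by blast
  qed
qed

end



context esg begin

lemma bip_key:
  assumes B: "bipartite V E" and M: "maximal_matching E M" and v: "v \<in> V" "v \<notin> \<Union>M"
    and N: "maximal_matching (del_vertex_E E v) N"
  shows "card N = card M"
proof (rule ccontr)
  assume neq: "card N \<noteq> card M"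
  note D = vd[OF N]
  have m: "matching E M" using max_match[OF M] .
  have nmax: "\<not> maximal_matching E N" using neq EQ M unfolding equimatchable_def by blast
  then obtain y where y: "{v,y} \<in> E" "y \<notin> \<Union>N" "maximal_matching E (insert {v,y} N)"
    "card (insert {v,y} N) = Suc (card N)" using D(4) by blast
  have cN: "Suc (card N) = card M" using y(3,4) EQ M unfolding equimatchable_def by metis
  have T0: "\<forall>x z. {x,z} \<in> M \<longrightarrow> hasU M x \<or> hasU M z"
  proof (intro allI impI, rule ccontr)
    fix x z assume xz: "{x,z} \<in> M" "\<not> (hasU M x \<or> hasU M z)"
    hence "V = {x,z}" using type0[OF M xz(1)] by blast
    moreover have "x \<in> \<Union>M" "z \<in> \<Union>M" using xz(1) by blast+
    ultimately show False using v by blast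
  qed
  have T2: "\<forall>x z. {x,z} \<in> M \<longrightarrow> \<not> (hasU M x \<and> hasU M z)"
  proof (intro allI impI notI)
    fix x z assume xz: "{x,z} \<in> M" "hasU M x \<and> hasU M z"
    then obtain w1 w2 where w: "w1 \<notin> \<Union>M" "{x,w1} \<in> E" "w2 \<notin> \<Union>M" "{z,w2} \<in> E"
      unfolding hasU_def by blast
    have "w1 = w2" using aug12[OF M xz(1) w(1) w(3) _ w(2) w(4)] by blast
    hence "{z,w1} \<in> E" using w(4) by simp
    moreover have "{w1,x} \<in> E" using w(2) ecomm by blast
    moreover have "{x,z} \<in> E" using Medge[OF M xz(1)] by blast
    ultimately show False using bip_tri[OF B] by blast
  qed
  have H: "(\<forall>v\<in>V. equimatchable (del_vertex_V V v) (del_vertex_E E v)) \<or> bipartite V E" using B by blast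
  define A where "A = {a \<in> \<Union>M. hasU M a}"
  have "A \<subseteq> V" using cov_V[OF m subset_refl] unfolding A_def by blast
  hence finA: "finite A" using finite_subset finV by blast
  have edgeA: "s \<in> A \<or> t \<in> A" if st: "{s,t} \<in> E" for s t
  proof (rule ccontr)
    assume "\<not> (s \<in> A \<or> t \<in> A)"
    hence "\<not> (s \<in> \<Union>M \<and> hasU M s)" "\<not> (t \<in> \<Union>M \<and> hasU M t)" unfolding A_def by auto
    thus False using BB[OF M T0 H st] by blast
  qed
  define g where "g a = (SOME e. e \<in> M \<and> a \<in> e)" for a
  have g: "g a \<in> M \<and> a \<in> g a" if "a \<in> A" for a
  proof -
    have "\<exists>e. e \<in> M \<and> a \<in> e" using that unfolding A_def by blast
    thus ?thesis unfolding g_def by (rule someI_ex)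
  qed
  have "inj_on g A"
  proof (rule inj_onI)
    fix a1 a2 assume a: "a1 \<in> A" "a2 \<in> A" "g a1 = g a2"
    show "a1 = a2"
    proof (rule ccontr)
      assume ne: "a1 \<noteq> a2"
      have "a2 \<in> g a1" using g[OF a(2)] a(3) by simp
      have ga: "g a1 \<in> M" "a1 \<in> g a1" using g[OF a(1)] by auto
      obtain b where b: "g a1 = {a1,b}" using partner[OF m subset_refl ga(2) ga(1)] by blast
      hence "b = a2" using \<open>a2 \<in> g a1\<close> ne by auto
      hence "{a1,a2} \<in> M" using b g[OF a(1)] by simp
      thus False using T2 a(1,2) unfolding A_def by blast
    qed
  qed
  moreover have "g ` A \<subseteq> M" using g by blast
  ultimately have cA: "card A \<le> card M" using card_inj_on_le[of g A M] match_fin[OF m subset_refl] by blast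
  define h where "h e = (SOME a. a \<in> e \<and> a \<in> A)" for e
  have mN: "matching E N" using D(1) .
  have h: "h e \<in> e \<and> h e \<in> A" if "e \<in> N" for e
  proof -
    have "e \<in> E" using match_sub[OF mN] that by blast
    then obtain s t where "e = {s,t}" using edge_form by blast
    hence "\<exists>a. a \<in> e \<and> a \<in> A" using edgeA \<open>e \<in> E\<close> by blast
    thus ?thesis unfolding h_def by (rule someI_ex)
  qed
  have injh: "inj_on h N"
  proof (rule inj_onI)
    fix e1 e2 assume a: "e1 \<in> N" "e2 \<in> N" "h e1 = h e2"
    thus "e1 = e2" using m_disj[OF mN a(1) a(2)] h[OF a(1)] h[OF a(2)] by simp
  qed
  have yM: "y \<in> \<Union>M" using max_edge[OF M y(1)] v(2) by blast
  have yA: "y \<in> A" using yM y(1) v(2) ecomm unfolding A_def hasU_def by blast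
  show False
  proof (cases "\<exists>y2. y2 \<noteq> y \<and> {v,y2} \<in> E \<and> y2 \<notin> \<Union>N")
    case True
    then obtain y2 where y2: "y2 \<noteq> y" "{v,y2} \<in> E" "y2 \<notin> \<Union>N" by blast
    have y2M: "y2 \<in> \<Union>M" using max_edge[OF M y2(2)] v(2) by blast
    have y2A: "y2 \<in> A" using y2M y2(2) v(2) ecomm unfolding A_def hasU_def by blast
    have "h ` N \<subseteq> A - {y,y2}" using h y(2) y2(3) by blast
    hence "card N \<le> card (A - {y,y2})" using card_inj_on_le[OF injh] finA by blast
    also have "\<dots> = card A - 2" using yA y2A y2(1) finA by (simp add: card_Diff_subset)
    finally have "card N \<le> card A - 2" .
    moreover have "card {y,y2} \<le> card A" using card_mono[OF finA] yA y2A by simp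
    hence "2 \<le> card A" using y2(1) by simp
    ultimately show False using cA cN by linarith
  next
    case False
    have all: "\<forall>f\<in>E. f \<inter> \<Union>N = {} \<longrightarrow> f = {v,y}"
    proof (intro ballI impI)
      fix f assume f: "f \<in> E" "f \<inter> \<Union>N = {}"
      have vf: "v \<in> f" using D(3) f by blast
      obtain z where z: "f = {v,z}" using edge_partner[OF f(1) vf] by blast
      have "z \<notin> \<Union>N" using f(2) z by blast
      hence "z = y" using False f(1) z by blast
      thus "f = {v,y}" using z by simp
    qed
    have n1: "{v,y} \<notin> M" using v(2) by blast
    have n2: "{v,y} \<notin> N" using D(2) by blast
    have n3: "equimatchable V (del_edge E {v,y})" using ES y(1) by blast
    have "card N = card M" using kill_edge[OF n3 M n1 mN n2 all] .
    thus False using neq by simp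
  qed
qed

lemma bip_vs:
  assumes B: "bipartite V E" and v: "v \<in> V"
  shows "equimatchable W (del_vertex_E E v)"
  unfolding equimatchable_def
proof (intro allI impI)
  fix N1 N2 assume h: "maximal_matching (del_vertex_E E v) N1 \<and> maximal_matching (del_vertex_E E v) N2"
  show "card N1 = card N2"
  proof (cases "\<exists>M. maximal_matching E M \<and> v \<notin> \<Union>M")
    case True
    then obtain M where M: "maximal_matching E M" "v \<notin> \<Union>M" by blast
    show ?thesis using bip_key[OF B M(1) v M(2)] h by metis
  next
    case False
    have "matching E {}" unfolding matching_def by simp
    then obtain M0 where M0: "maximal_matching E M0" using extend[OF subset_refl] by blast
    have k: "Suc (card N) = card M0" if N: "maximal_matching (del_vertex_E E v) N" for N
    proof -
      note D = vd[OF N]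
      have "\<not> maximal_matching E N" using False D(2) by blast
      then obtain y where y: "maximal_matching E (insert {v,y} N)" "card (insert {v,y} N) = Suc (card N)"
        using D(4) by blast
      thus ?thesis using EQ M0 unfolding equimatchable_def by metis
    qed
    show ?thesis using k h by (metis Suc_inject)
  qed
qed

end

theorem corollary8p1:
  fixes V :: "'a set" and E :: "'a set set"
  assumes "graph V E" and "connected_graph V E" and "equimatchable V E"
  shows "((\<forall>v\<in>V. equimatchable (del_vertex_V V v) (del_vertex_E E v)) \<and>
          (\<forall>e\<in>E. equimatchable V (del_edge E e)))
     \<longleftrightarrow> ((complete_graph V E \<and> odd (card V)) \<or>
          (bipartite V E \<and> edge_stable V E))"
proof -
  interpret eqg V E using assms by (simp add: eqg_def eqg_axioms_def gr_def)
  show ?thesis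
  proof
    assume L: "(\<forall>v\<in>V. equimatchable (del_vertex_V V v) (del_vertex_E E v)) \<and>
          (\<forall>e\<in>E. equimatchable V (del_edge E e))"
    interpret vsg V E using L assms by (simp add: vsg_def vsg_axioms_def esg_def esg_axioms_def eqg_def eqg_axioms_def gr_def)
    have "edge_stable V E" using L assms(3) unfolding edge_stable_def by blast
    thus "(complete_graph V E \<and> odd (card V)) \<or> (bipartite V E \<and> edge_stable V E)" using fwd by blast
  next
    assume R: "(complete_graph V E \<and> odd (card V)) \<or> (bipartite V E \<and> edge_stable V E)"
    show "(\<forall>v\<in>V. equimatchable (del_vertex_V V v) (del_vertex_E E v)) \<and>
          (\<forall>e\<in>E. equimatchable V (del_edge E e))"
    proof (cases "complete_graph V E \<and> odd (card V)")
      case True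
      thus ?thesis using K_vs K_es by blast
    next
      case False
      hence B: "bipartite V E" and es: "edge_stable V E" using R by auto
      have ES0: "\<forall>e\<in>E. equimatchable V (del_edge E e)" using es unfolding edge_stable_def by blast
      interpret esg V E using ES0 assms by (simp add: esg_def esg_axioms_def eqg_def eqg_axioms_def gr_def)
      show ?thesis using bip_vs[OF B] ES0 by blast
    qed
  qed
qed

end
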